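(* Let $n,k$ be positive integers with $T_k(n)\neq\emptyset$. Let $G\in T_k(n)$ and let $z$ be a quasi vertex of $G$. If $\alpha<0$ and ${}^0R_{\alpha}(G)$ is minimum over $T_k(n)$, then $d(z)=n-1$. If $\alpha>0$ and ${}^0R_{\alpha}(G)$ is maximum over $T_k(n)$, then $d(z)=n-1$.
   Context: All graphs are finite, simple, undirected and connected. For a graph $G$ and real $\alpha\neq 0$, the zeroth-order general Randić index is ${}^0R_{\alpha}(G)=\sum_{v\in V(G)}d(v)^{\alpha}$, where $d(v)$ is the degree of $v$. A connected graph $G$ is a $k$-generalized quasi tree if there is a subset $V_k\subset V(G)$ with $|V_k|=k$ such that $G-V_k$ is a tree, but for every subset $V_{k-1}\subset V(G)$ with $|V_{k-1}|=k-1$, $G-V_{k-1}$ is not a tree; the vertices of such a set $V_k$ are called quasi vertices of $G$. $T_k(n)$ denotes the class of $k$-generalized quasi trees of order $n$. *)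

theory Defs
  imports Complex_Main
begin

definition simple_graph :: "nat set \<Rightarrow> nat set set \<Rightarrow> bool" where
  "simple_graph V E \<longleftrightarrow> finite V \<and>
     (\<forall>e\<in>E. \<exists>u v. u \<noteq> v \<and> u \<in> V \<and> v \<in> V \<and> e = {u, v})"

definition adj :: "nat set set \<Rightarrow> nat \<Rightarrow> nat \<Rightarrow> bool" where
  "adj E u v \<longleftrightarrow> u \<noteq> v \<and> {u, v} \<in> E"

definition degree :: "nat set \<Rightarrow> nat set set \<Rightarrow> nat \<Rightarrow> nat" where
  "degree V E v = card {u \<in> V. adj E v u}"

definition connected_graph :: "nat set \<Rightarrow> nat set set \<Rightarrow> bool" where
  "connected_graph V E \<longleftrightarrow> V \<noteq> {} \<and>
     (\<forall>u\<in>V. \<forall>v\<in>V. (u, v) \<in> {(a, b). adj E a b}\<^sup>*)"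

definition has_cycle :: "nat set \<Rightarrow> nat set set \<Rightarrow> bool" where
  "has_cycle V E \<longleftrightarrow> (\<exists>cs. length cs \<ge> 3 \<and> distinct cs \<and> set cs \<subseteq> V \<and>
     (\<forall>i < length cs. adj E (cs ! i) (cs ! ((i + 1) mod length cs))))"

definition is_tree :: "nat set \<Rightarrow> nat set set \<Rightarrow> bool" where
  "is_tree V E \<longleftrightarrow> simple_graph V E \<and> connected_graph V E \<and> \<not> has_cycle V E"

definition del_vertices :: "nat set \<Rightarrow> nat set set \<Rightarrow> nat set \<Rightarrow> nat set \<times> nat set set" where
  "del_vertices V E S = (V - S, {e \<in> E. e \<inter> S = {}})"

definition removal_tree :: "nat set \<Rightarrow> nat set set \<Rightarrow> nat set \<Rightarrow> bool" where
  "removal_tree V E S \<longleftrightarrow> S \<subseteq> V \<and> is_tree (fst (del_vertices V E S)) (snd (del_vertices V E S))"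

definition gen_quasi_tree :: "nat \<Rightarrow> nat set \<Rightarrow> nat set set \<Rightarrow> bool" where
  "gen_quasi_tree k V E \<longleftrightarrow> simple_graph V E \<and> connected_graph V E \<and>
     (\<exists>S. card S = k \<and> removal_tree V E S) \<and>
     (\<forall>S. S \<subseteq> V \<and> card S + 1 = k \<longrightarrow> \<not> removal_tree V E S)"

definition quasi_vertex :: "nat \<Rightarrow> nat set \<Rightarrow> nat set set \<Rightarrow> nat \<Rightarrow> bool" where
  "quasi_vertex k V E z \<longleftrightarrow> (\<exists>S. card S = k \<and> removal_tree V E S \<and> z \<in> S)"

definition T_class :: "nat \<Rightarrow> nat \<Rightarrow> (nat set \<times> nat set set) set" where
  "T_class k n = {(V, E). card V = n \<and> gen_quasi_tree k V E}"

definition zeroth_randic :: "real \<Rightarrow> nat set \<Rightarrow> nat set set \<Rightarrow> real" where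
  "zeroth_randic \<alpha> V E = (\<Sum>v\<in>V. real (degree V E v) powr \<alpha>)"

end

theory Submission
  imports Defs
begin

lemma sg_edge_in:
  assumes "simple_graph W F" "{u, y} \<in> F" shows "u \<in> W \<and> y \<in> W"
proof -
  obtain a b where ab: "a \<in> W" "b \<in> W" "{u, y} = {a, b}"
    using assms unfolding simple_graph_def by blast
  then have "{u, y} \<subseteq> W" by simp
  then show ?thesis by simp
qed

lemma conn_step:
  assumes "connected_graph W F" "u \<in> W" "v \<in> W" "u \<noteq> v"
  shows "\<exists>y. adj F u y"
proof -
  from assms have "(u, v) \<in> {(a, b). adj F a b}\<^sup>*" unfolding connected_graph_def by blast
  then show ?thesis using assms(4)
    by (cases rule: converse_rtranclE) auto
qed

lemma triangle:
  assumes "a \<in> W" "b \<in> W" "c \<in> W" "a \<noteq> b" "b \<noteq> c" "a \<noteq> c"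
    "adj F a b" "adj F b c" "adj F c a"
  shows "has_cycle W F"
  unfolding has_cycle_def
proof (rule exI[of _ "[a,b,c]"], intro conjI allI impI)
  fix i assume "i < length [a,b,c]"
  then have "i = 0 \<or> i = 1 \<or> i = 2" by auto
  then show "adj F ([a,b,c] ! i) ([a,b,c] ! ((i + 1) mod length [a,b,c]))"
    using assms by auto
qed (use assms in auto)

lemma adj_sym: "adj F a b \<Longrightarrow> adj F b a"
  unfolding adj_def by (simp add: insert_commute)

lemma no_small:
  assumes sg: "simple_graph V E" and cg: "connected_graph V E"
    and noS: "\<forall>S. S \<subseteq> V \<and> card S + 1 = k \<longrightarrow> \<not> removal_tree V E S"
    and cV: "card V = k + 1" and k: "k > 0"
  shows False
proof -
  have finV: "finite V" using sg simple_graph_def by blast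
  have "V \<noteq> {}" using cg unfolding connected_graph_def by blast
  then obtain a where a: "a \<in> V" by blast
  have "card (V - {a}) = k" using cV a finV by simp
  then have "V - {a} \<noteq> {}" using k by (metis card.empty less_irrefl)
  then obtain b where b: "b \<in> V" "b \<noteq> a" by blast
  obtain y where ay: "adj E a y" using conn_step[OF cg a b(1) b(2)[symmetric]] by blast
  have y: "y \<in> V" "y \<noteq> a" using ay sg_edge_in[OF sg] unfolding adj_def by auto
  define S' where "S' = V - {a, y}"
  have cS': "card S' + 1 = k" unfolding S'_def using a y finV cV k
    by (simp add: card_Diff_subset)
  have S'V: "S' \<subseteq> V" unfolding S'_def by blast
  have VS: "V - S' = {a, y}" unfolding S'_def using a y by blast
  let ?F = "{e \<in> E. e \<inter> S' = {}}"
  have "simple_graph {a, y} ?F"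
    unfolding simple_graph_def
  proof (intro conjI ballI)
    fix e assume e: "e \<in> ?F"
    then have eE: "e \<in> E" and eS: "e \<inter> S' = {}" by auto
    from sg eE obtain u v where uv: "u \<noteq> v" "u \<in> V" "v \<in> V" "e = {u, v}"
      unfolding simple_graph_def by blast
    have "u \<notin> S'" "v \<notin> S'" using eS uv(4) by auto
    then have "u \<in> {a, y}" "v \<in> {a, y}" using uv(2,3) unfolding S'_def by auto
    then show "\<exists>u v. u \<noteq> v \<and> u \<in> {a, y} \<and> v \<in> {a, y} \<and> e = {u, v}"
      using uv(1,4) by (intro exI[of _ u] exI[of _ v]) simp
  qed simp
  moreover have "connected_graph {a, y} ?F"
  proof -
    have e1: "adj ?F a y" using ay unfolding adj_def S'_def by auto
    then have e2: "adj ?F y a" by (rule adj_sym)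
    have r1: "(a, y) \<in> {(p, q). adj ?F p q}\<^sup>*" using e1 by (intro r_into_rtrancl) simp
    have r2: "(y, a) \<in> {(p, q). adj ?F p q}\<^sup>*" using e2 by (intro r_into_rtrancl) simp
    show ?thesis unfolding connected_graph_def
    proof (intro conjI ballI)
      fix p q assume "p \<in> {a, y}" "q \<in> {a, y}"
      then show "(p, q) \<in> {(p, q). adj ?F p q}\<^sup>*" using r1 r2 by blast
    qed simp
  qed
  moreover have "\<not> has_cycle {a, y} ?F"
  proof
    assume "has_cycle {a, y} ?F"
    then obtain cs where cs: "length cs \<ge> 3" "distinct cs" "set cs \<subseteq> {a, y}"
      unfolding has_cycle_def by blast
    have "length cs = card (set cs)" using cs(2) by (simp add: distinct_card)
    also have "\<dots> \<le> card {a, y}" using cs(3) by (simp add: card_mono)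
    also have "\<dots> \<le> 2" by (simp add: card_insert_le_m1)
    finally show False using cs(1) by simp
  qed
  ultimately have "removal_tree V E S'"
    unfolding removal_tree_def del_vertices_def is_tree_def using S'V VS by simp
  then show False using noS S'V cS' by blast
qed


lemma ex_of_card: "1 \<le> card A \<Longrightarrow> \<exists>x. x \<in> A"
  by (metis card.empty ex_in_conv not_one_le_zero)

lemma deg_pos:
  assumes sg: "simple_graph V E" and cg: "connected_graph V E"
    and v: "v \<in> V" and u: "u \<in> V" "u \<noteq> v"
  shows "degree V E v \<ge> 1"
proof -
  obtain y where vy: "adj E v y" using conn_step[OF cg v u(1) u(2)[symmetric]] by blast
  have "y \<in> V" using vy sg_edge_in[OF sg] unfolding adj_def by auto
  then have "y \<in> {u \<in> V. adj E v u}" using vy by blast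
  moreover have "finite {u \<in> V. adj E v u}" using sg unfolding simple_graph_def by auto
  ultimately have "card {u \<in> V. adj E v u} > 0" using card_gt_0_iff by blast
  then show ?thesis unfolding degree_def by simp
qed

lemma improve:
  assumes VE: "(V, E) \<in> T_class k n" and k: "0 < k"
    and S: "card S = k" "removal_tree V E S" "z \<in> S"
    and nd: "degree V E z \<noteq> n - 1"
  shows "\<exists>E2. (V, E2) \<in> T_class k n \<and> (\<forall>v\<in>V. degree V E v \<le> degree V E2 v)
              \<and> degree V E z < degree V E2 z"
proof -
  from VE have cV: "card V = n" and gq: "gen_quasi_tree k V E" by (auto simp: T_class_def)
  from gq have sg: "simple_graph V E" and cg: "connected_graph V E"
    and noS: "\<forall>S. S \<subseteq> V \<and> card S + 1 = k \<longrightarrow> \<not> removal_tree V E S"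
    by (auto simp: gen_quasi_tree_def)
  have finV: "finite V" using sg simple_graph_def by blast
  have SV: "S \<subseteq> V" using S(2) unfolding removal_tree_def by blast
  have T: "is_tree (V - S) {e \<in> E. e \<inter> S = {}}"
    using S(2) unfolding removal_tree_def del_vertices_def by simp
  have finS: "finite S" using SV finV finite_subset by blast
  have cVS: "card (V - S) = n - k" using SV finS cV S(1) by (simp add: card_Diff_subset)
  have "V - S \<noteq> {}" using T unfolding is_tree_def connected_graph_def by blast
  then have "card (V - S) > 0" using finV by auto
  then have nk1: "n \<ge> k + 1" using cVS by simp
  have "n \<noteq> k + 1" using no_small[OF sg cg noS _ k] cV by blast
  then have nk: "n \<ge> k + 2" using nk1 by simp
  define E2 where "E2 = E \<union> {e. \<exists>s\<in>S. \<exists>v\<in>V. s \<noteq> v \<and> e = {s, v}}"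
  have adjmono: "adj E a b \<Longrightarrow> adj E2 a b" for a b unfolding adj_def E2_def by blast
  have univ: "s \<in> S \<Longrightarrow> v \<in> V \<Longrightarrow> s \<noteq> v \<Longrightarrow> adj E2 s v" for s v
    unfolding adj_def E2_def by blast
  have univ2: "s \<in> S \<Longrightarrow> v \<in> V \<Longrightarrow> s \<noteq> v \<Longrightarrow> adj E2 v s" for s v
    using univ adj_sym by blast
  have sg2: "simple_graph V E2"
    unfolding simple_graph_def
  proof (intro conjI ballI)
    fix e assume "e \<in> E2"
    then consider "e \<in> E" | s v where "s \<in> S" "v \<in> V" "s \<noteq> v" "e = {s, v}"
      unfolding E2_def by blast
    then show "\<exists>u v. u \<noteq> v \<and> u \<in> V \<and> v \<in> V \<and> e = {u, v}"
    proof cases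
      case 1
      then show ?thesis using sg unfolding simple_graph_def by blast
    next
      case (2 s v)
      then show ?thesis using SV by (intro exI[of _ s] exI[of _ v]) auto
    qed
  qed (rule finV)
  have cg2: "connected_graph V E2"
  proof -
    have "{(a, b). adj E a b} \<subseteq> {(a, b). adj E2 a b}" using adjmono by blast
    then have "{(a, b). adj E a b}\<^sup>* \<subseteq> {(a, b). adj E2 a b}\<^sup>*" by (rule rtrancl_mono)
    then show ?thesis using cg unfolding connected_graph_def by blast
  qed
  have eqF: "{e \<in> E2. e \<inter> S = {}} = {e \<in> E. e \<inter> S = {}}"
    unfolding E2_def by blast
  have rt2: "removal_tree V E2 S"
    using S(2) unfolding removal_tree_def del_vertices_def by (simp add: eqF)
  have noS2: "\<forall>S'. S' \<subseteq> V \<and> card S' + 1 = k \<longrightarrow> \<not> removal_tree V E2 S'"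
  proof (intro allI impI notI)
    fix S' assume a1: "S' \<subseteq> V \<and> card S' + 1 = k" and rt: "removal_tree V E2 S'"
    let ?W = "V - S'"
    let ?F = "{e \<in> E2. e \<inter> S' = {}}"
    have nc: "\<not> has_cycle ?W ?F"
      using rt unfolding removal_tree_def del_vertices_def is_tree_def by simp
    have adjF: "a \<notin> S' \<Longrightarrow> b \<notin> S' \<Longrightarrow> adj E2 a b \<Longrightarrow> adj ?F a b" for a b
      unfolding adj_def by blast
    have finS': "finite S'" using a1 finV finite_subset by blast
    have "\<not> S \<subseteq> S'"
    proof
      assume "S \<subseteq> S'"
      then have "card S \<le> card S'" using finS' card_mono by blast
      then show False using a1 S(1) by simp
    qed
    then obtain s where s: "s \<in> S" "s \<notin> S'" by blast
    show False
    proof (cases "S - S' = {s}")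
      case True
      have "card (S - S') = card S - card (S \<inter> S')" using finS by (simp add: card_Diff_subset_Int)
      moreover have "card (S \<inter> S') \<le> card S" using finS by (simp add: card_mono)
      moreover have "card (S - S') = 1" using True by simp
      ultimately have "card (S \<inter> S') = card S'" using S(1) a1 by arith
      then have "S \<inter> S' = S'" using finS' by (intro card_subset_eq) auto
      then have S'S: "S' \<subseteq> S" by blast
      have "card (V - S) \<ge> 2" using cVS nk by simp
      then obtain u where u: "u \<in> V - S" using ex_of_card[of "V - S"] by fastforce
      have "card (V - S - {u}) \<ge> 1" using \<open>card (V - S) \<ge> 2\<close> u finV by simp
      then obtain v where v: "v \<in> V - S" "v \<noteq> u" using ex_of_card[of "V - S - {u}"] by blast
      have cT: "connected_graph (V - S) {e \<in> E. e \<inter> S = {}}"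
        and sT: "simple_graph (V - S) {e \<in> E. e \<inter> S = {}}" using T is_tree_def by auto
      obtain y where uy: "adj {e \<in> E. e \<inter> S = {}} u y" using conn_step[OF cT u v(1) v(2)[symmetric]] by blast
      have y: "y \<in> V - S" using uy sg_edge_in[OF sT] unfolding adj_def by auto
      have uyE: "adj E2 u y" using uy adjmono unfolding adj_def by blast
      have "has_cycle ?W ?F"
      proof (rule triangle[of s _ u y])
        show "adj ?F s u" using adjF univ s u S'S by blast
        show "adj ?F u y" using adjF uyE u y S'S by blast
        show "adj ?F y s" using adjF univ2 s y S'S by blast
      qed (use s u y SV S'S uy in \<open>auto simp: adj_def\<close>)
      then show False using nc by blast
    next
      case False
      then obtain s' where s': "s' \<in> S" "s' \<notin> S'" "s' \<noteq> s" using s by blast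
      have cW: "card ?W = n - card S'" using a1 finS' cV by (simp add: card_Diff_subset)
      have c3: "card ?W \<ge> 3" using cW a1 nk by arith
      have "{s, s'} \<subseteq> ?W" using s s' SV by blast
      then have "card (?W - {s, s'}) = card ?W - 2" using finV s' by (simp add: card_Diff_subset)
      then have "card (?W - {s, s'}) \<ge> 1" using c3 by arith
      then obtain c where c: "c \<in> ?W" "c \<noteq> s" "c \<noteq> s'" using ex_of_card[of "?W - {s, s'}"] by blast
      have "has_cycle ?W ?F"
      proof (rule triangle[of s _ s' c])
        show "adj ?F s s'" using adjF univ s s' SV by blast
        show "adj ?F s' c" using adjF univ s' c by blast
        show "adj ?F c s" using adjF univ2 s c by blast
      qed (use s s' c SV in auto)
      then show False using nc by blast
    qed
  qed
  have ex: "\<exists>S. card S = k \<and> removal_tree V E2 S" using S(1) rt2 by blast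
  have "gen_quasi_tree k V E2" unfolding gen_quasi_tree_def
    using sg2 cg2 ex noS2 by (intro conjI)
  then have inT: "(V, E2) \<in> T_class k n" unfolding T_class_def using cV by simp
  have finN: "finite {u \<in> V. adj F v u}" for F v using finV by simp
  have dmono: "\<forall>v\<in>V. degree V E v \<le> degree V E2 v"
  proof
    fix v assume "v \<in> V"
    have "{u \<in> V. adj E v u} \<subseteq> {u \<in> V. adj E2 v u}" using adjmono by blast
    then show "degree V E v \<le> degree V E2 v" unfolding degree_def
      using finN[of E2 v] by (rule card_mono[rotated])
  qed
  have zV: "z \<in> V" using SV S(3) by blast
  have sub: "{u \<in> V. adj E z u} \<subseteq> V - {z}" unfolding adj_def by blast
  have cz: "card (V - {z}) = n - 1" using zV finV cV by simp
  have neq: "{u \<in> V. adj E z u} \<noteq> V - {z}"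
  proof
    assume "{u \<in> V. adj E z u} = V - {z}"
    then have "degree V E z = n - 1" unfolding degree_def using cz by simp
    then show False using nd by simp
  qed
  obtain w where w: "w \<in> V" "w \<noteq> z" "\<not> adj E z w" using sub neq by blast
  have zw: "adj E2 z w" using univ[OF S(3) w(1) w(2)[symmetric]] .
  have sub2: "{u \<in> V. adj E z u} \<subseteq> {u \<in> V. adj E2 z u}" using adjmono by blast
  have "w \<in> {u \<in> V. adj E2 z u}" "w \<notin> {u \<in> V. adj E z u}" using w zw by auto
  then have "{u \<in> V. adj E z u} \<subset> {u \<in> V. adj E2 z u}" using sub2 by blast
  then have "degree V E z < degree V E2 z" unfolding degree_def
    using finN[of E2 z] by (rule psubset_card_mono[rotated])
  then show ?thesis using inT dmono by blast
qed

theorem mainTheorem7: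
  fixes n k :: nat and V :: "nat set" and E :: "nat set set" and z :: nat and \<alpha> :: real
  assumes "0 < n" and "0 < k" and "T_class k n \<noteq> {}"
    and "(V, E) \<in> T_class k n" and "quasi_vertex k V E z"
  shows "(\<alpha> < 0 \<and> (\<forall>(V', E') \<in> T_class k n. zeroth_randic \<alpha> V E \<le> zeroth_randic \<alpha> V' E')
            \<longrightarrow> degree V E z = n - 1)
       \<and> (\<alpha> > 0 \<and> (\<forall>(V', E') \<in> T_class k n. zeroth_randic \<alpha> V' E' \<le> zeroth_randic \<alpha> V E)
            \<longrightarrow> degree V E z = n - 1)"
proof -
  from assms(4) have cV: "card V = n" and gq: "gen_quasi_tree k V E" by (auto simp: T_class_def)
  from gq have sg: "simple_graph V E" and cg: "connected_graph V E"
    by (auto simp: gen_quasi_tree_def)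
  obtain S where S: "card S = k" "removal_tree V E S" "z \<in> S"
    using assms(5) unfolding quasi_vertex_def by blast
  have finV: "finite V" using sg simple_graph_def by blast
  have SV: "S \<subseteq> V" using S(2) unfolding removal_tree_def by blast
  have zV: "z \<in> V" using SV S(3) by blast
  have T: "is_tree (V - S) {e \<in> E. e \<inter> S = {}}"
    using S(2) unfolding removal_tree_def del_vertices_def by simp
  have "V - S \<noteq> {}" using T unfolding is_tree_def connected_graph_def by blast
  then obtain u where u: "u \<in> V" "u \<noteq> z" using S(3) by blast
  have dpos: "degree V E v \<ge> 1" if v: "v \<in> V" for v
  proof (cases "v = z")
    case True
    then show ?thesis using deg_pos[OF sg cg v u(1)] u(2) by blast
  next
    case False
    then show ?thesis using deg_pos[OF sg cg v zV] by blast
  qed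
  show ?thesis
  proof (intro conjI impI)
    assume A: "\<alpha> < 0 \<and> (\<forall>(V', E') \<in> T_class k n. zeroth_randic \<alpha> V E \<le> zeroth_randic \<alpha> V' E')"
    show "degree V E z = n - 1"
    proof (rule ccontr)
      assume nd: "degree V E z \<noteq> n - 1"
      obtain E2 where E2: "(V, E2) \<in> T_class k n" "\<forall>v\<in>V. degree V E v \<le> degree V E2 v"
        "degree V E z < degree V E2 z"
        using improve[OF assms(4) assms(2) S nd] by blast
      have "zeroth_randic \<alpha> V E2 < zeroth_randic \<alpha> V E"
        unfolding zeroth_randic_def
      proof (rule sum_strict_mono_ex1[OF finV])
        show "\<forall>x\<in>V. real (degree V E2 x) powr \<alpha> \<le> real (degree V E x) powr \<alpha>"
        proof
          fix x assume x: "x \<in> V"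
          show "real (degree V E2 x) powr \<alpha> \<le> real (degree V E x) powr \<alpha>"
            using A dpos[OF x] E2(2) x by (intro powr_mono2') auto
        qed
        show "\<exists>a\<in>V. real (degree V E2 a) powr \<alpha> < real (degree V E a) powr \<alpha>"
          using A dpos[OF zV] E2(3) zV by (intro bexI[of _ z] powr_less_mono2_neg) auto
      qed
      moreover have "zeroth_randic \<alpha> V E \<le> zeroth_randic \<alpha> V E2" using A E2(1) by blast
      ultimately show False by simp
    qed
  next
    assume A: "\<alpha> > 0 \<and> (\<forall>(V', E') \<in> T_class k n. zeroth_randic \<alpha> V' E' \<le> zeroth_randic \<alpha> V E)"
    show "degree V E z = n - 1"
    proof (rule ccontr)
      assume nd: "degree V E z \<noteq> n - 1"
      obtain E2 where E2: "(V, E2) \<in> T_class k n" "\<forall>v\<in>V. degree V E v \<le> degree V E2 v"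
        "degree V E z < degree V E2 z"
        using improve[OF assms(4) assms(2) S nd] by blast
      have "zeroth_randic \<alpha> V E < zeroth_randic \<alpha> V E2"
        unfolding zeroth_randic_def
      proof (rule sum_strict_mono_ex1[OF finV])
        show "\<forall>x\<in>V. real (degree V E x) powr \<alpha> \<le> real (degree V E2 x) powr \<alpha>"
        proof
          fix x assume x: "x \<in> V"
          show "real (degree V E x) powr \<alpha> \<le> real (degree V E2 x) powr \<alpha>"
            using A E2(2) x by (intro powr_mono2) auto
        qed
        show "\<exists>a\<in>V. real (degree V E a) powr \<alpha> < real (degree V E2 a) powr \<alpha>"
          using A E2(3) zV by (intro bexI[of _ z] powr_less_mono2) auto
      qed
      moreover have "zeroth_randic \<alpha> V E2 \<le> zeroth_randic \<alpha> V E" using A E2(1) by blast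
      ultimately show False by simp
    qed
  qed
qed

end
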